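(* Let $i,j\in G$, let $\rho$ be a state on $L_2(G)$ with $\operatorname{Tr}K_{|\overline{b_i}\rangle\langle\overline{b_i}|}(\rho)>0$, and let $\gamma$ be a state on $L_2(G)$ such that $\operatorname{Tr}K_\gamma\big(U_jK_{|\overline{b_i}\rangle\langle\overline{b_i}|}(\rho)U_j^*\big)>0$. Then $\operatorname{Tr}_{1,2,3}(F_{i,j}\otimes I)(\rho\otimes\mathbf e(\gamma))(F_{i,j}\otimes I)>0$ and $$\Lambda_{i,j}(\rho\otimes\gamma)=\hat K_\gamma\circ K^j\circ\hat K_{|\overline{b_i}\rangle\langle\overline{b_i}|}(\rho),$$ where $K^j(\sigma)=U_j\sigma U_j^*$. Equivalently, $\Lambda_{i,j}(\rho\otimes\gamma)$ is the normalization to trace one of $K_\gamma(U_jB_i^*\rho B_iU_j^* )$.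
   Context: Fix an integer $n\ge 1$ and $G=\{1,\dots,n\}$. $L_2(G)$ is the space of functions $f:G\to\mathbb C$ with inner product $\langle f,g\rangle=\sum_{k\in G}\overline{f(k)}g(k)$; $L_2(G^2)$, $L_2(G^3)$ are the analogous spaces on $G^2,G^3$, identified with tensor products via $(f\otimes g)(k,l)=f(k)g(l)$; the three factors of $L_2(G^3)=\mathcal H_1\otimes\mathcal H_2\otimes\mathcal H_3$ are numbered 1,2,3. For a vector $f$, $|f\rangle\langle f|$ is the operator $\phi\mapsto\langle f,\phi\rangle f$. $I$ is the identity. A state is a positive operator of trace 1. For $k,l\in G$, $k\oplus l$ is the unique element of $G$ congruent to $k+l$ modulo $n$. $\mathcal O_g$ is the multiplication operator $(\mathcal O_gf)(k)=g(k)f(k)$. $J:L_2(G)\to L_2(G^2)$ is $(Jf)(k,l)=f(k)\delta_{k,l}$. $U_k$ is the unitary $(U_kf)(m)=f(k\oplus m)$. $(b_k)_{k\in G}$ is a fixed orthonormal basis of $L_2(G)$, $B_k=\mathcal O_{b_k}$, $\overline{b_i}$ the complex conjugate function. $\xi_{k,l}(m,r)=b_k(m)\delta_{m,r\oplus l}$ and $F_{i,j}=|\xi_{i,j}\rangle\langle\xi_{i,j}|$ (an operator on $\mathcal H_1\otimes\mathcal H_2$). For a state $\gamma$, $\mathbf e(\gamma):=J\gamma J^*$ (a state on $\mathcal H_2\otimes\mathcal H_3$). For states $\rho,\gamma$ with positive denominator, $$\Lambda_{i,j}(\rho\otimes\gamma):=\frac{\operatorname{Tr}_{1,2}(F_{i,j}\otimes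 I)(\rho\otimes\mathbf e(\gamma))(F_{i,j}\otimes I)}{\operatorname{Tr}_{1,2,3}(F_{i,j}\otimes I)(\rho\otimes\mathbf e(\gamma))(F_{i,j}\otimes I)},$$ with $\operatorname{Tr}_{1,2}$ the partial trace over $\mathcal H_1\otimes\mathcal H_2$ and $\operatorname{Tr}_{1,2,3}$ the full trace. For a positive operator $\tau=\sum_k\gamma_k|h_k\rangle\langle h_k|$ ($\gamma_k\ge0$, $(h_k)$ orthonormal basis), $K_\tau(\rho):=\sum_k\gamma_k\mathcal O_{h_k}\rho\mathcal O_{h_k}^*$ for positive operators $\rho$ (independent of the representation of $\tau$); for $\rho$ with $\operatorname{Tr}K_\tau(\rho)>0$, $\hat K_\tau(\rho):=K_\tau(\rho)/\operatorname{Tr}K_\tau(\rho)$. In particular $K_{|\overline{b_i}\rangle\langle\overline{b_i}|}(\rho)=B_i^*\rho B_i$. *)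

theory Defs
  imports Complex_Main "HOL-Library.Complex_Order"
begin

text \<open>Finite-dimensional operators are represented by their kernels (matrices):
  an operator A from L2(Y) to L2(X) is a function X -> Y -> complex, acting by
  (A f)(x) = sum over y of A x y * f y.\<close>

type_synonym ('a, 'b) kernel = "'a \<Rightarrow> 'b \<Rightarrow> complex"

definition G :: "nat \<Rightarrow> nat set" where
  "G n = {1..n}"

definition oplus :: "nat \<Rightarrow> nat \<Rightarrow> nat \<Rightarrow> nat" where
  "oplus n k l = (THE m. m \<in> G n \<and> m mod n = (k + l) mod n)"

definition inner :: "'a set \<Rightarrow> ('a \<Rightarrow> complex) \<Rightarrow> ('a \<Rightarrow> complex) \<Rightarrow> complex" where
  "inner X f g = (\<Sum>x\<in>X. cnj (f x) * g x)"

definition mmul :: "'z set \<Rightarrow> ('x, 'z) kernel \<Rightarrow> ('z, 'y) kernel \<Rightarrow> ('x, 'y) kernel" where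
  "mmul Z A B = (\<lambda>x y. \<Sum>z\<in>Z. A x z * B z y)"

definition adj :: "('x, 'y) kernel \<Rightarrow> ('y, 'x) kernel" where
  "adj A = (\<lambda>y x. cnj (A x y))"

definition trace :: "'a set \<Rightarrow> ('a, 'a) kernel \<Rightarrow> complex" where
  "trace X A = (\<Sum>x\<in>X. A x x)"

definition positive_op :: "'a set \<Rightarrow> ('a, 'a) kernel \<Rightarrow> bool" where
  "positive_op X A \<longleftrightarrow> (\<forall>\<phi>. 0 \<le> (\<Sum>x\<in>X. \<Sum>y\<in>X. cnj (\<phi> x) * A x y * \<phi> y))"

definition is_state :: "'a set \<Rightarrow> ('a, 'a) kernel \<Rightarrow> bool" where
  "is_state X A \<longleftrightarrow> positive_op X A \<and> trace X A = 1"

definition ketbra :: "('a \<Rightarrow> complex) \<Rightarrow> ('a, 'a) kernel" where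
  "ketbra f = (\<lambda>x y. f x * cnj (f y))"

definition idop :: "('a, 'a) kernel" where
  "idop = (\<lambda>x y. if x = y then 1 else 0)"

definition tensor :: "('a, 'a) kernel \<Rightarrow> ('b, 'b) kernel \<Rightarrow> ('a \<times> 'b, 'a \<times> 'b) kernel" where
  "tensor A B = (\<lambda>(x, y) (x', y'). A x x' * B y y')"

definition assoc_op :: "('a \<times> 'b \<times> 'c, 'a \<times> 'b \<times> 'c) kernel \<Rightarrow> (('a \<times> 'b) \<times> 'c, ('a \<times> 'b) \<times> 'c) kernel" where
  "assoc_op C = (\<lambda>((a, b), c) ((a', b'), c'). C (a, b, c) (a', b', c'))"

definition ptrace1 :: "'a set \<Rightarrow> ('a \<times> 'b, 'a \<times> 'b) kernel \<Rightarrow> ('b, 'b) kernel" where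
  "ptrace1 X C = (\<lambda>y y'. \<Sum>x\<in>X. C (x, y) (x, y'))"

definition mult_op :: "('a \<Rightarrow> complex) \<Rightarrow> ('a, 'a) kernel" where
  "mult_op g = (\<lambda>x y. if x = y then g x else 0)"

definition Jop :: "(nat \<times> nat, nat) kernel" where
  "Jop = (\<lambda>(k, l) m. if k = l \<and> k = m then 1 else 0)"

definition Uop :: "nat \<Rightarrow> nat \<Rightarrow> (nat, nat) kernel" where
  "Uop n k = (\<lambda>m m'. if m' = oplus n k m then 1 else 0)"

definition orthonormal_basis :: "nat \<Rightarrow> (nat \<Rightarrow> nat \<Rightarrow> complex) \<Rightarrow> bool" where
  "orthonormal_basis n h \<longleftrightarrow>
     (\<forall>k\<in>G n. \<forall>l\<in>G n. inner (G n) (h k) (h l) = (if k = l then 1 else 0))"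

definition Kmap :: "nat \<Rightarrow> (nat, nat) kernel \<Rightarrow> (nat, nat) kernel \<Rightarrow> (nat, nat) kernel" where
  "Kmap n \<tau> \<rho> = (SOME \<sigma>. \<exists>\<gamma>s h. orthonormal_basis n h \<and> (\<forall>k\<in>G n. 0 \<le> \<gamma>s k) \<and>
      (\<forall>x\<in>G n. \<forall>y\<in>G n. \<tau> x y = (\<Sum>k\<in>G n. \<gamma>s k * ketbra (h k) x y)) \<and>
      \<sigma> = (\<lambda>x y. \<Sum>k\<in>G n. \<gamma>s k *
              mmul (G n) (mmul (G n) (mult_op (h k)) \<rho>) (adj (mult_op (h k))) x y))"

definition Khat :: "nat \<Rightarrow> (nat, nat) kernel \<Rightarrow> (nat, nat) kernel \<Rightarrow> (nat, nat) kernel" where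
  "Khat n \<tau> \<rho> = (\<lambda>x y. Kmap n \<tau> \<rho> x y / trace (G n) (Kmap n \<tau> \<rho>))"

definition Kconj :: "nat \<Rightarrow> nat \<Rightarrow> (nat, nat) kernel \<Rightarrow> (nat, nat) kernel" where
  "Kconj n j \<sigma> = mmul (G n) (mmul (G n) (Uop n j) \<sigma>) (adj (Uop n j))"

definition xi :: "nat \<Rightarrow> (nat \<Rightarrow> nat \<Rightarrow> complex) \<Rightarrow> nat \<Rightarrow> nat \<Rightarrow> nat \<times> nat \<Rightarrow> complex" where
  "xi n b k l = (\<lambda>(m, r). if m = oplus n r l then b k m else 0)"

definition Fop :: "nat \<Rightarrow> (nat \<Rightarrow> nat \<Rightarrow> complex) \<Rightarrow> nat \<Rightarrow> nat \<Rightarrow> (nat \<times> nat, nat \<times> nat) kernel" where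
  "Fop n b i j = ketbra (xi n b i j)"

definition eop :: "nat \<Rightarrow> (nat, nat) kernel \<Rightarrow> (nat \<times> nat, nat \<times> nat) kernel" where
  "eop n \<gamma> = mmul (G n) (mmul (G n) Jop \<gamma>) (adj Jop)"

definition sandwich :: "nat \<Rightarrow> (nat \<Rightarrow> nat \<Rightarrow> complex) \<Rightarrow> nat \<Rightarrow> nat \<Rightarrow>
    (nat, nat) kernel \<Rightarrow> (nat, nat) kernel \<Rightarrow> ((nat \<times> nat) \<times> nat, (nat \<times> nat) \<times> nat) kernel" where
  "sandwich n b i j \<rho> \<gamma> =
     mmul ((G n \<times> G n) \<times> G n)
       (mmul ((G n \<times> G n) \<times> G n) (tensor (Fop n b i j) idop) (assoc_op (tensor \<rho> (eop n \<gamma>))))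
       (tensor (Fop n b i j) idop)"

definition Lambda :: "nat \<Rightarrow> (nat \<Rightarrow> nat \<Rightarrow> complex) \<Rightarrow> nat \<Rightarrow> nat \<Rightarrow>
    (nat, nat) kernel \<Rightarrow> (nat, nat) kernel \<Rightarrow> (nat, nat) kernel" where
  "Lambda n b i j \<rho> \<gamma> = (\<lambda>x y.
     ptrace1 (G n \<times> G n) (sandwich n b i j \<rho> \<gamma>) x y
       / trace ((G n \<times> G n) \<times> G n) (sandwich n b i j \<rho> \<gamma>))"

end

theory Submission
  imports Defs "Jordan_Normal_Form.Char_Poly"
begin

lemma eigvec_exists:
  fixes A :: "'a \<Rightarrow> 'a \<Rightarrow> complex"
  assumes fin: "finite X" and ne: "X \<noteq> {}"
  shows "\<exists>u \<mu>. (\<exists>x\<in>X. u x \<noteq> 0) \<and> (\<forall>x\<in>X. (\<Sum>y\<in>X. A x y * u y) = \<mu> * u x)"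
proof -
  define m where "m = card X"
  have m0: "m > 0" using fin ne by (simp add: m_def card_gt_0_iff)
  obtain f where f: "bij_betw f {0..<m} X" using ex_bij_betw_nat_finite[OF fin] m_def by blast
  define M where "M = mat m m (\<lambda>(i,j). A (f i) (f j))"
  have Mc: "M \<in> carrier_mat m m" by (simp add: M_def)
  obtain as where as: "char_poly M = (\<Prod>a\<leftarrow>as. [:- a, 1:])" "length as = m"
    using char_poly_factorized[OF Mc] by blast
  then obtain a rest where ar: "as = a # rest" using m0 by (cases as) auto
  have "poly (char_poly M) a = 0" unfolding as(1) ar by (simp add: poly_prod_list)
  hence "eigenvalue M a" using eigenvalue_root_char_poly[OF Mc] by simp
  then obtain v where ev: "eigenvector M v a" unfolding eigenvalue_def by blast
  hence vc: "v \<in> carrier_vec m" and v0: "v \<noteq> 0\<^sub>v m" and Mv: "M *\<^sub>v v = a \<cdot>\<^sub>v v"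
    unfolding eigenvector_def using Mc by auto
  define g where "g = the_inv_into {0..<m} f"
  have gf: "\<And>i. i < m \<Longrightarrow> g (f i) = i" unfolding g_def
    using f by (simp add: bij_betw_def the_inv_into_f_f)
  define u where "u x = v $ g x" for x
  have "\<exists>i<m. v $ i \<noteq> 0"
  proof (rule ccontr)
    assume "\<not> ?thesis"
    hence "v = 0\<^sub>v m" using vc by (intro eq_vecI) auto
    thus False using v0 by simp
  qed
  then obtain i where i: "i < m" "v $ i \<noteq> 0" by blast
  have ex: "\<exists>x\<in>X. u x \<noteq> 0"
    using i f gf by (intro bexI[of _ "f i"]) (auto simp: u_def bij_betw_def)
  have ev2: "\<forall>x\<in>X. (\<Sum>y\<in>X. A x y * u y) = a * u x"
  proof
    fix x assume x: "x \<in> X"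
    then obtain i where i: "i < m" "x = f i" using f by (auto simp: bij_betw_def)
    have "(\<Sum>y\<in>X. A x y * u y) = (\<Sum>j\<in>{0..<m}. A x (f j) * u (f j))"
      using sum.reindex_bij_betw[OF f, of "\<lambda>y. A x y * u y"] by simp
    also have "\<dots> = (\<Sum>j\<in>{0..<m}. M $$ (i, j) * v $ j)"
      using i gf by (intro sum.cong) (auto simp: M_def u_def)
    also have "\<dots> = (M *\<^sub>v v) $ i"
      using i Mc vc by (simp add: mult_mat_vec_def scalar_prod_def row_def)
    also have "\<dots> = a * u x" using Mv i vc gf by (simp add: u_def)
    finally show "(\<Sum>y\<in>X. A x y * u y) = a * u x" .
  qed
  show ?thesis using ex ev2 by blast
qed

definition herm :: "'a set \<Rightarrow> ('a,'a) kernel \<Rightarrow> bool" where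
  "herm X A \<longleftrightarrow> (\<forall>x\<in>X. \<forall>y\<in>X. A y x = cnj (A x y))"

lemma mmul_assoc:
  assumes "finite Z" "finite W"
  shows "mmul Z (mmul W A B) C = mmul W A (mmul Z B C)"
  unfolding mmul_def fun_eq_iff
  by (auto simp: sum_distrib_left sum_distrib_right mult.assoc intro: sum.swap)

lemma adj_mmul: "adj (mmul Z A B) = mmul Z (adj B) (adj A)"
  by (simp add: adj_def mmul_def fun_eq_iff mult.commute)

lemma mmul_cong:
  assumes "\<forall>z\<in>Z. A x z = A' x z" "\<forall>z\<in>Z. B z y = B' z y"
  shows "mmul Z A B x y = mmul Z A' B' x y"
  using assms unfolding mmul_def by (auto intro: sum.cong)

lemma delta_mult [simp]:
  "(if P then 1 else 0) * (b::complex) = (if P then b else 0)"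
  "(b::complex) * (if P then 1 else 0) = (if P then b else 0)"
  by auto

lemma mmul_idop_left: "finite Z \<Longrightarrow> x \<in> Z \<Longrightarrow> mmul Z idop B x y = B x y"
  by (simp add: mmul_def idop_def)

lemma mmul_idop_right: "finite Z \<Longrightarrow> y \<in> Z \<Longrightarrow> mmul Z A idop x y = A x y"
  by (simp add: mmul_def idop_def)

lemma adj_adj[simp]: "adj (adj A) = A" by (simp add: adj_def fun_eq_iff)

lemma mmul_inv_left:
  assumes "finite X" "\<forall>x\<in>X. \<forall>y\<in>X. mmul X P Q x y = idop x y" "x \<in> X"
  shows "mmul X P (mmul X Q Z) x y = Z x y"
proof -
  have "mmul X P (mmul X Q Z) x y = mmul X (mmul X P Q) Z x y"
    by (simp only: mmul_assoc[OF assms(1) assms(1)])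
  also have "\<dots> = mmul X idop Z x y"
    using assms by (intro mmul_cong) auto
  also have "\<dots> = Z x y" using assms by (simp add: mmul_idop_left)
  finally show ?thesis .
qed

lemma repr_mmul:
  assumes "finite X"
  shows "(\<Sum>k\<in>X. U x k * lam k * cnj (U y k)) = mmul X (mmul X U (mult_op lam)) (adj U) x y"
  using assms by (simp add: mmul_def mult_op_def adj_def if_distrib cong: if_cong)

lemma spectral:
  assumes "finite X"
  shows "herm X A \<Longrightarrow> \<exists>U lam. (\<forall>k\<in>X. \<forall>l\<in>X. mmul X (adj U) U k l = idop k l) \<and>
     (\<forall>x\<in>X. \<forall>y\<in>X. A x y = (\<Sum>k\<in>X. U x k * lam k * cnj (U y k)))"
  using assms
proof (induction X arbitrary: A rule: finite_remove_induct)
  case empty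
  then show ?case by auto
next
  case (remove X A)
  note fin = remove.hyps(1)
  obtain x0 where x0: "x0 \<in> X" using remove.hyps(2) by blast
  obtain u \<mu> where u: "\<exists>x\<in>X. u x \<noteq> 0" and ev: "\<forall>x\<in>X. (\<Sum>y\<in>X. A x y * u y) = \<mu> * u x"
    using eigvec_exists[OF fin remove.hyps(2), of A] by blast
  define nu where "nu = (\<Sum>x\<in>X. (cmod (u x))^2)"
  have nu: "nu > 0"
  proof -
    obtain x where x: "x \<in> X" "u x \<noteq> 0" using u by blast
    show ?thesis unfolding nu_def
      by (rule sum_pos2[OF fin x(1)]) (use x in auto)
  qed
  define u1 where "u1 x = u x / complex_of_real (sqrt nu)" for x
  have ev1: "\<forall>x\<in>X. (\<Sum>y\<in>X. A x y * u1 y) = \<mu> * u1 x"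
    using ev by (simp add: u1_def sum_divide_distrib[symmetric] mult.assoc)
  have norm1: "(\<Sum>x\<in>X. cnj (u1 x) * u1 x) = 1"
  proof -
    have "(\<Sum>x\<in>X. cnj (u1 x) * u1 x) = (\<Sum>x\<in>X. complex_of_real ((cmod (u x))^2) / complex_of_real nu)"
    proof (intro sum.cong refl)
      fix x
      have "complex_of_real (sqrt nu) * complex_of_real (sqrt nu) = complex_of_real nu"
        using nu by (simp add: of_real_mult[symmetric] del: of_real_mult)
      moreover have "cnj (u x) * u x = complex_of_real ((cmod (u x))^2)"
        using complex_norm_square[of "u x"] by (simp add: mult.commute)
      ultimately show "cnj (u1 x) * u1 x = complex_of_real ((cmod (u x))^2) / complex_of_real nu"
        by (simp add: u1_def)
    qed
    also have "\<dots> = complex_of_real nu / complex_of_real nu"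
      by (simp add: sum_divide_distrib[symmetric] nu_def)
    finally show ?thesis using nu by simp
  qed
  define r where "r = cmod (u1 x0)"
  define p where "p = (if u1 x0 = 0 then 1 else u1 x0 / complex_of_real r)"
  have np: "cmod p = 1"
    by (simp add: p_def r_def norm_divide)
  have pp: "cnj p * p = 1"
    using complex_norm_square[of p] np by (simp add: mult.commute)
  have pu: "u1 x0 = complex_of_real r * p"
    by (simp add: p_def r_def)
  define e where "e x = (if x = x0 then 1 else 0 :: complex)" for x
  define w where "w x = u1 x + p * e x" for x
  define c where "c = complex_of_real (1 + r)"
  have r0: "r \<ge> 0" by (simp add: r_def)
  hence c0: "c \<noteq> 0" unfolding c_def by (simp only: of_real_eq_0_iff)
  have cc: "cnj c = c" by (simp add: c_def)
  define H where "H x y = idop x y - w x * cnj (w y) / c" for x y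
  have ww: "(\<Sum>z\<in>X. cnj (w z) * w z) = 2 * c"
  proof -
    have "\<And>z. cnj (w z) * w z = cnj (u1 z) * u1 z +
        (if z = x0 then cnj p * u1 x0 + p * cnj (u1 x0) + cnj p * p else 0)"
      by (auto simp: w_def e_def algebra_simps)
    hence "(\<Sum>z\<in>X. cnj (w z) * w z) = 1 + (cnj p * u1 x0 + p * cnj (u1 x0) + cnj p * p)"
      using norm1 x0 fin by (simp add: sum.distrib)
    also have "\<dots> = 2 * c"
    proof -
      have "cnj p * u1 x0 = complex_of_real r" unfolding pu using pp by (simp add: algebra_simps)
      moreover have "p * cnj (u1 x0) = complex_of_real r" unfolding pu using pp by (simp add: algebra_simps)
      ultimately show ?thesis using pp by (simp add: c_def)
    qed
    finally show ?thesis .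
  qed
  have HH: "\<forall>x\<in>X. \<forall>y\<in>X. mmul X H H x y = idop x y"
  proof (intro ballI)
    fix x y assume x: "x \<in> X" and y: "y \<in> X"
    have pt: "H x z * H z y = idop x z * idop z y - (if z = x then w z * cnj (w y) / c else 0)
       - (if z = y then w x * cnj (w z) / c else 0) + w x * cnj (w y) / (c * c) * (cnj (w z) * w z)" for z
      using c0 by (auto simp: H_def idop_def field_simps)
    have "mmul X H H x y = (\<Sum>z\<in>X. idop x z * idop z y) - w x * cnj (w y) / c
       - w x * cnj (w y) / c + w x * cnj (w y) / (c * c) * (\<Sum>z\<in>X. cnj (w z) * w z)"
      unfolding mmul_def pt using x y fin
      by (simp add: sum.distrib sum_subtractf sum_distrib_left)
    also have "\<dots> = idop x y" using x y fin c0 unfolding ww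
      by (simp add: idop_def field_simps)
    finally show "mmul X H H x y = idop x y" .
  qed
  have adjH: "adj H = H"
    by (simp add: adj_def H_def idop_def fun_eq_iff cc)
  have Hx0: "H x x0 = - cnj p * u1 x" for x
  proof -
    have "cnj (w x0) = c * cnj p" using pp unfolding w_def e_def pu c_def
      by (simp add: algebra_simps)
    thus ?thesis using c0 pp unfolding H_def idop_def w_def e_def
      by (auto simp: field_simps)
  qed
  have Hu: "(\<Sum>y\<in>X. H x y * u1 y) = - p * e x" if x: "x \<in> X" for x
  proof -
    have eq: "u1 y = - p * H y x0" for y
    proof -
      have "- p * H y x0 = (cnj p * p) * u1 y" unfolding Hx0 by (simp add: mult_ac)
      thus ?thesis using pp by simp
    qed
    have "(\<Sum>y\<in>X. H x y * u1 y) = (\<Sum>y\<in>X. H x y * (- p * H y x0))"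
      by (rule sum.cong) (use eq in auto)
    also have "\<dots> = - p * mmul X H H x x0"
      by (simp add: mmul_def sum_distrib_left mult_ac)
    also have "\<dots> = - p * e x" using HH x x0 by (simp add: idop_def e_def)
    finally show ?thesis .
  qed
  define A' where "A' = mmul X (mmul X H A) H"
  have A'col: "A' x x0 = \<mu> * e x" if x: "x \<in> X" for x
  proof -
    have inner: "mmul X A H y x0 = - cnj p * \<mu> * u1 y" if "y \<in> X" for y
    proof -
      have "mmul X A H y x0 = (\<Sum>z\<in>X. A y z * (- cnj p * u1 z))"
        unfolding mmul_def Hx0 ..
      also have "\<dots> = - cnj p * (\<Sum>z\<in>X. A y z * u1 z)"
        by (simp add: sum_distrib_left mult_ac)
      also have "\<dots> = - cnj p * \<mu> * u1 y" using ev1 that by simp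
      finally show ?thesis .
    qed
    have "A' x x0 = mmul X H (mmul X A H) x x0" unfolding A'_def by (simp only: mmul_assoc[OF fin fin])
    also have "\<dots> = (\<Sum>y\<in>X. H x y * (- cnj p * \<mu> * u1 y))"
      unfolding mmul_def[of X H] using inner by (intro sum.cong refl) auto
    also have "\<dots> = - cnj p * \<mu> * (\<Sum>y\<in>X. H x y * u1 y)"
      by (simp add: sum_distrib_left mult_ac)
    also have "\<dots> = (cnj p * p) * \<mu> * e x" using Hu[OF x] by (simp add: mult_ac)
    also have "\<dots> = \<mu> * e x" using pp by simp
    finally show ?thesis .
  qed
  have adjA: "adj A z v = A z v" if "z \<in> X" "v \<in> X" for z v
  proof -
    have "A z v = cnj (A v z)" using remove.prems(1) that unfolding herm_def by blast
    thus ?thesis by (simp add: adj_def)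
  qed
  have A'herm: "herm X A'"
    unfolding herm_def
  proof (intro ballI)
    fix x y assume x: "x \<in> X" and y: "y \<in> X"
    have "cnj (A' x y) = adj A' y x" by (simp add: adj_def)
    also have "\<dots> = mmul X H (mmul X (adj A) H) y x"
      unfolding A'_def adj_mmul adjH by (simp only: mmul_assoc[OF fin fin])
    also have "\<dots> = mmul X H (mmul X A H) y x"
    proof (rule mmul_cong)
      show "\<forall>z\<in>X. mmul X (adj A) H z x = mmul X A H z x"
        using adjA by (auto intro!: mmul_cong)
    qed simp
    also have "\<dots> = A' y x" unfolding A'_def by (simp only: mmul_assoc[OF fin fin])
    finally show "A' y x = cnj (A' x y)" by simp
  qed
  have A'row: "A' x0 x = 0" if "x \<in> X" "x \<noteq> x0" for x
  proof -
    have "A' x0 x = cnj (A' x x0)" using A'herm that x0 unfolding herm_def by blast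
    thus ?thesis using A'col[OF that(1)] that by (simp add: e_def)
  qed
  define Y where "Y = X - {x0}"
  have hermY: "herm Y A'" using A'herm unfolding herm_def Y_def by blast
  obtain U' lam' where U'o: "\<forall>k\<in>Y. \<forall>l\<in>Y. mmul Y (adj U') U' k l = idop k l"
    and U'r: "\<forall>x\<in>Y. \<forall>y\<in>Y. A' x y = (\<Sum>k\<in>Y. U' x k * lam' k * cnj (U' y k))"
    using remove.IH[OF x0, of A'] hermY fin unfolding Y_def by auto
  define U2 where "U2 x k = (if k = x0 then e x else if x = x0 then 0 else U' x k)" for x k
  define lam2 where "lam2 k = (if k = x0 then A' x0 x0 else lam' k)" for k
  have finY: "finite Y" using fin by (simp add: Y_def)
  have XY: "X = insert x0 Y" using x0 by (auto simp: Y_def)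
  have x0Y: "x0 \<notin> Y" by (simp add: Y_def)
  have orth2: "mmul X (adj U2) U2 k l = idop k l" if k: "k \<in> X" and l: "l \<in> X" for k l
  proof -
    have "mmul X (adj U2) U2 k l = cnj (U2 x0 k) * U2 x0 l + (\<Sum>x\<in>Y. cnj (U2 x k) * U2 x l)"
      unfolding mmul_def adj_def XY using finY x0Y by simp
    also have "\<dots> = idop k l"
    proof (cases "k = x0")
      case True
      have "(\<Sum>x\<in>Y. cnj (U2 x k) * U2 x l) = 0"
        using x0Y True by (intro sum.neutral) (auto simp: U2_def e_def)
      thus ?thesis using True by (auto simp: U2_def e_def idop_def)
    next
      case kn: False
      show ?thesis
      proof (cases "l = x0")
        case True
        have "(\<Sum>x\<in>Y. cnj (U2 x k) * U2 x l) = 0"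
          using x0Y True by (intro sum.neutral) (auto simp: U2_def e_def)
        thus ?thesis using True kn by (auto simp: U2_def e_def idop_def)
      next
        case False
        have "(\<Sum>x\<in>Y. cnj (U2 x k) * U2 x l) = mmul Y (adj U') U' k l"
          unfolding mmul_def adj_def using x0Y kn False by (intro sum.cong refl) (auto simp: U2_def)
        also have "\<dots> = idop k l" using U'o k l kn False by (auto simp: Y_def)
        finally show ?thesis using kn False by (simp add: U2_def e_def)
      qed
    qed
    finally show ?thesis .
  qed
  have rep2: "A' x y = (\<Sum>k\<in>X. U2 x k * lam2 k * cnj (U2 y k))" if x: "x \<in> X" and y: "y \<in> X" for x y
  proof -
    have "(\<Sum>k\<in>X. U2 x k * lam2 k * cnj (U2 y k)) = e x * A' x0 x0 * cnj (e y) +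
        (\<Sum>k\<in>Y. U2 x k * lam' k * cnj (U2 y k))"
      unfolding XY using finY x0Y
      by (simp add: U2_def lam2_def) (intro sum.cong refl, auto)
    also have "\<dots> = A' x y"
    proof (cases "x = x0")
      case True
      hence "(\<Sum>k\<in>Y. U2 x k * lam' k * cnj (U2 y k)) = 0"
        using x0Y by (intro sum.neutral) (auto simp: U2_def)
      moreover have "e x * A' x0 x0 * cnj (e y) = A' x y"
        using True A'row y by (auto simp: e_def)
      ultimately show ?thesis by simp
    next
      case xn: False
      show ?thesis
      proof (cases "y = x0")
        case True
        hence "(\<Sum>k\<in>Y. U2 x k * lam' k * cnj (U2 y k)) = 0"
          using x0Y by (intro sum.neutral) (auto simp: U2_def)
        moreover have "A' x y = 0" using True A'col[OF x] xn by (simp add: e_def)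
        ultimately show ?thesis using xn by (simp add: e_def)
      next
        case False
        have "(\<Sum>k\<in>Y. U2 x k * lam' k * cnj (U2 y k)) = (\<Sum>k\<in>Y. U' x k * lam' k * cnj (U' y k))"
          using x0Y xn False by (intro sum.cong refl) (auto simp: U2_def)
        also have "\<dots> = A' x y" using U'r x y xn False by (simp add: Y_def)
        finally show ?thesis using xn by (simp add: e_def)
      qed
    qed
    finally show ?thesis by simp
  qed
  define U where "U = mmul X H U2"
  have adjU: "adj U = mmul X (adj U2) H" unfolding U_def adj_mmul adjH ..
  have orth: "mmul X (adj U) U k l = idop k l" if k: "k \<in> X" and l: "l \<in> X" for k l
  proof -
    have "mmul X (adj U) U k l = mmul X (adj U2) (mmul X H (mmul X H U2)) k l"
      unfolding adjU unfolding U_def by (simp only: mmul_assoc[OF fin fin])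
    also have "\<dots> = mmul X (adj U2) U2 k l"
      using mmul_inv_left[OF fin HH] by (intro mmul_cong) auto
    finally show ?thesis using orth2[OF k l] by simp
  qed
  have rep: "A x y = (\<Sum>k\<in>X. U x k * lam2 k * cnj (U y k))" if x: "x \<in> X" and y: "y \<in> X" for x y
  proof -
    define D where "D = mult_op lam2"
    have "(\<Sum>k\<in>X. U x k * lam2 k * cnj (U y k)) = mmul X (mmul X U D) (adj U) x y"
      unfolding D_def by (rule repr_mmul[OF fin])
    also have "\<dots> = mmul X H (mmul X (mmul X (mmul X U2 D) (adj U2)) H) x y"
      unfolding adjU unfolding U_def by (simp only: mmul_assoc[OF fin fin])
    also have "\<dots> = mmul X H (mmul X A' H) x y"
    proof (rule mmul_cong)
      have "mmul X (mmul X U2 D) (adj U2) z v = A' z v" if "z \<in> X" "v \<in> X" for z v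
        using rep2[OF that] repr_mmul[OF fin, of U2 z lam2 v] unfolding D_def by simp
      thus "\<forall>z\<in>X. mmul X (mmul X (mmul X U2 D) (adj U2)) H z y = mmul X A' H z y"
        by (auto intro!: mmul_cong)
    qed simp
    also have "\<dots> = mmul X H (mmul X H (mmul X A (mmul X H H))) x y"
      unfolding A'_def by (simp only: mmul_assoc[OF fin fin])
    also have "\<dots> = mmul X A (mmul X H H) x y" by (rule mmul_inv_left[OF fin HH x])
    also have "\<dots> = mmul X A idop x y" using HH y by (intro mmul_cong) auto
    also have "\<dots> = A x y" by (rule mmul_idop_right[OF fin y])
    finally show ?thesis by simp
  qed
  show ?case using orth rep by blast
qed

lemma quad_support:
  assumes "finite X" "S \<subseteq> X" "\<forall>z. z \<notin> S \<longrightarrow> \<phi> z = 0"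
  shows "(\<Sum>a\<in>X. \<Sum>b\<in>X. cnj (\<phi> a) * A a b * \<phi> b) = (\<Sum>a\<in>S. \<Sum>b\<in>S. cnj (\<phi> a) * A a b * \<phi> b)"
proof -
  have "(\<Sum>b\<in>X. cnj (\<phi> a) * A a b * \<phi> b) = (\<Sum>b\<in>S. cnj (\<phi> a) * A a b * \<phi> b)" for a
    using assms by (intro sum.mono_neutral_right) auto
  hence "(\<Sum>a\<in>X. \<Sum>b\<in>X. cnj (\<phi> a) * A a b * \<phi> b) = (\<Sum>a\<in>X. \<Sum>b\<in>S. cnj (\<phi> a) * A a b * \<phi> b)"
    by simp
  also have "\<dots> = (\<Sum>a\<in>S. \<Sum>b\<in>S. cnj (\<phi> a) * A a b * \<phi> b)"
    by (rule sum.mono_neutral_right) (use assms in auto)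
  finally show ?thesis .
qed

lemma pos_herm:
  assumes fin: "finite X" and pos: "positive_op X A"
  shows "herm X A"
  unfolding herm_def
proof (intro ballI)
  fix x y assume x: "x \<in> X" and y: "y \<in> X"
  have Q: "0 \<le> (\<Sum>a\<in>X. \<Sum>b\<in>X. cnj (\<phi> a) * A a b * \<phi> b)" for \<phi>
    using pos unfolding positive_op_def by blast
  have diag: "Im (A z z) = 0" if z: "z \<in> X" for z
  proof -
    define \<phi> where "\<phi> v = (if v = z then 1 else 0::complex)" for v
    have "0 \<le> (\<Sum>a\<in>{z}. \<Sum>b\<in>{z}. cnj (\<phi> a) * A a b * \<phi> b)"
      using Q[of \<phi>] quad_support[OF fin, of "{z}" \<phi> A] z by (auto simp: \<phi>_def)
    thus ?thesis by (simp add: \<phi>_def less_eq_complex_def)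
  qed
  show "A y x = cnj (A x y)"
  proof (cases "x = y")
    case True
    thus ?thesis using diag[OF x] by (simp add: complex_eq_iff)
  next
    case False
    define \<phi>1 where "\<phi>1 v = (if v = x then 1 else if v = y then 1 else 0::complex)" for v
    define \<phi>2 where "\<phi>2 v = (if v = x then 1 else if v = y then \<i> else 0::complex)" for v
    have "0 \<le> (\<Sum>a\<in>{x,y}. \<Sum>b\<in>{x,y}. cnj (\<phi>1 a) * A a b * \<phi>1 b)"
      using Q[of \<phi>1] quad_support[OF fin, of "{x,y}" \<phi>1 A] x y by (auto simp: \<phi>1_def)
    hence 1: "Im (A x y) + Im (A y x) = 0"
      using False diag[OF x] diag[OF y] by (simp add: \<phi>1_def less_eq_complex_def)
    have "0 \<le> (\<Sum>a\<in>{x,y}. \<Sum>b\<in>{x,y}. cnj (\<phi>2 a) * A a b * \<phi>2 b)"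
      using Q[of \<phi>2] quad_support[OF fin, of "{x,y}" \<phi>2 A] x y by (auto simp: \<phi>2_def)
    hence 2: "Re (A x y) - Re (A y x) = 0"
      using False diag[OF x] diag[OF y] by (simp add: \<phi>2_def less_eq_complex_def)
    show ?thesis using 1 2 by (simp add: complex_eq_iff)
  qed
qed

lemma ifz_simps:
  "(if P then a else 0) * (b::complex) = (if P then a * b else 0)"
  "(b::complex) * (if P then a else 0) = (if P then b * a else 0)"
  "cnj (if P then a else 0) = (if P then cnj a else 0)"
  by auto

lemma mmul_mult_op_left: "finite X \<Longrightarrow> mmul X (mult_op g) B x y = (if x \<in> X then g x * B x y else 0)"
  by (simp add: mmul_def mult_op_def ifz_simps)

lemma mmul_mult_op_right: "finite X \<Longrightarrow> mmul X B (adj (mult_op g)) x y = (if y \<in> X then B x y * cnj (g y) else 0)"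
  by (simp add: mmul_def mult_op_def adj_def ifz_simps)

lemma Kmap_eq:
  assumes "\<exists>\<gamma>s h. orthonormal_basis n h \<and> (\<forall>k\<in>G n. 0 \<le> \<gamma>s k) \<and>
      (\<forall>x\<in>G n. \<forall>y\<in>G n. \<tau> x y = (\<Sum>k\<in>G n. \<gamma>s k * ketbra (h k) x y))"
  shows "Kmap n \<tau> \<rho> x y = (if x \<in> G n \<and> y \<in> G n then \<tau> x y * \<rho> x y else 0)"
proof -
  let ?P = "\<lambda>\<sigma>. \<exists>\<gamma>s h. orthonormal_basis n h \<and> (\<forall>k\<in>G n. 0 \<le> \<gamma>s k) \<and>
      (\<forall>x\<in>G n. \<forall>y\<in>G n. \<tau> x y = (\<Sum>k\<in>G n. \<gamma>s k * ketbra (h k) x y)) \<and>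
      \<sigma> = (\<lambda>x y. \<Sum>k\<in>G n. \<gamma>s k *
              mmul (G n) (mmul (G n) (mult_op (h k)) \<rho>) (adj (mult_op (h k))) x y)"
  have "\<exists>\<sigma>. ?P \<sigma>" using assms by blast
  hence "?P (Kmap n \<tau> \<rho>)" unfolding Kmap_def by (rule someI_ex)
  then obtain \<gamma>s h where rep: "\<forall>x\<in>G n. \<forall>y\<in>G n. \<tau> x y = (\<Sum>k\<in>G n. \<gamma>s k * ketbra (h k) x y)"
    and K: "Kmap n \<tau> \<rho> = (\<lambda>x y. \<Sum>k\<in>G n. \<gamma>s k *
              mmul (G n) (mmul (G n) (mult_op (h k)) \<rho>) (adj (mult_op (h k))) x y)" by blast
  have fin: "finite (G n)" by (simp add: G_def)
  have m: "mmul (G n) (mmul (G n) (mult_op (h k)) \<rho>) (adj (mult_op (h k))) x y =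
      (if x \<in> G n \<and> y \<in> G n then h k x * \<rho> x y * cnj (h k y) else 0)" for k
    using fin by (simp add: mmul_mult_op_left mmul_mult_op_right)
  show ?thesis
  proof (cases "x \<in> G n \<and> y \<in> G n")
    case True
    have "Kmap n \<tau> \<rho> x y = (\<Sum>k\<in>G n. \<gamma>s k * ketbra (h k) x y) * \<rho> x y"
      unfolding K m using True by (simp add: sum_distrib_right sum_distrib_left ketbra_def mult_ac)
    thus ?thesis using rep True by simp
  next
    case False
    hence "Kmap n \<tau> \<rho> x y = 0" unfolding K m by (simp only: if_False) simp
    thus ?thesis using False by auto
  qed
qed

lemma finG[simp]: "finite (G n)" by (simp add: G_def)

lemma state_rep:
  assumes pos: "positive_op (G n) \<gamma>"
  shows "\<exists>\<gamma>s h. orthonormal_basis n h \<and> (\<forall>k\<in>G n. 0 \<le> \<gamma>s k) \<and>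
      (\<forall>x\<in>G n. \<forall>y\<in>G n. \<gamma> x y = (\<Sum>k\<in>G n. \<gamma>s k * ketbra (h k) x y))"
proof -
  define X where "X = G n"
  have fin: "finite X" by (simp add: X_def)
  obtain U lam where orth: "\<forall>k\<in>X. \<forall>l\<in>X. mmul X (adj U) U k l = idop k l"
    and rep: "\<forall>x\<in>X. \<forall>y\<in>X. \<gamma> x y = (\<Sum>k\<in>X. U x k * lam k * cnj (U y k))"
    using spectral[OF fin pos_herm[OF fin pos[folded X_def]]] by blast
  define h where "h k x = U x k" for k x
  have ob: "orthonormal_basis n h"
    unfolding orthonormal_basis_def X_def[symmetric]
    using orth by (simp add: inner_def h_def mmul_def adj_def idop_def)
  have rep2: "\<forall>x\<in>X. \<forall>y\<in>X. \<gamma> x y = (\<Sum>k\<in>X. lam k * ketbra (h k) x y)"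
    using rep by (simp add: ketbra_def h_def mult_ac)
  have nonneg: "0 \<le> lam k" if k: "k \<in> X" for k
  proof -
    define D where "D = mult_op lam"
    have "0 \<le> (\<Sum>x\<in>X. \<Sum>y\<in>X. cnj (h k x) * \<gamma> x y * h k y)"
      using pos unfolding positive_op_def X_def by blast
    also have "(\<Sum>x\<in>X. \<Sum>y\<in>X. cnj (h k x) * \<gamma> x y * h k y) = mmul X (mmul X (adj U) \<gamma>) U k k"
      unfolding mmul_def adj_def h_def sum_distrib_right by (rule sum.swap)
    also have "\<dots> = mmul X (mmul X (adj U) (mmul X (mmul X U D) (adj U))) U k k"
    proof (rule mmul_cong)
      have "\<gamma> x y = mmul X (mmul X U D) (adj U) x y" if "x \<in> X" "y \<in> X" for x y
        using rep that repr_mmul[OF fin, of U x lam y] unfolding D_def by simp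
      thus "\<forall>z\<in>X. mmul X (adj U) \<gamma> k z = mmul X (adj U) (mmul X (mmul X U D) (adj U)) k z"
        by (auto intro!: mmul_cong)
    qed simp
    also have "\<dots> = mmul X (adj U) (mmul X U (mmul X D (mmul X (adj U) U))) k k"
      by (simp only: mmul_assoc[OF fin fin])
    also have "\<dots> = mmul X D (mmul X (adj U) U) k k"
      by (rule mmul_inv_left[OF fin orth k])
    also have "\<dots> = mmul X D idop k k" using orth k by (intro mmul_cong) auto
    also have "\<dots> = lam k" using fin k by (simp add: mmul_idop_right D_def mult_op_def)
    finally show ?thesis .
  qed
  show ?thesis using ob rep2 nonneg unfolding X_def by blast
qed

lemma ketbra_rep:
  assumes ob: "orthonormal_basis n b" and i: "i \<in> G n"
  shows "\<exists>\<gamma>s h. orthonormal_basis n h \<and> (\<forall>k\<in>G n. 0 \<le> \<gamma>s k) \<and>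
      (\<forall>x\<in>G n. \<forall>y\<in>G n. ketbra (\<lambda>m. cnj (b i m)) x y = (\<Sum>k\<in>G n. \<gamma>s k * ketbra (h k) x y))"
proof (intro exI conjI)
  show "orthonormal_basis n (\<lambda>k m. cnj (b k m))"
    using ob unfolding orthonormal_basis_def inner_def
  proof (intro ballI)
    fix k l assume "\<forall>k\<in>G n. \<forall>l\<in>G n. (\<Sum>x\<in>G n. cnj (b k x) * b l x) = (if k = l then 1 else 0)"
      "k \<in> G n" "l \<in> G n"
    hence "cnj (\<Sum>x\<in>G n. cnj (b k x) * b l x) = (if k = l then 1 else 0)" by simp
    thus "(\<Sum>x\<in>G n. cnj (cnj (b k x)) * cnj (b l x)) = (if k = l then 1 else 0)"
      by (simp add: mult.commute)
  qed
  show "\<forall>k\<in>G n. 0 \<le> (if k = i then 1 else 0 :: complex)" by (simp add: less_eq_complex_def)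
  show "\<forall>x\<in>G n. \<forall>y\<in>G n. ketbra (\<lambda>m. cnj (b i m)) x y =
      (\<Sum>k\<in>G n. (if k = i then 1 else 0) * ketbra ((\<lambda>k m. cnj (b k m)) k) x y)"
    using i by simp
qed

lemma Gmod_eq: "m \<in> G n \<Longrightarrow> m = (if m mod n = 0 then n else m mod n)"
  by (auto simp: G_def dest: le_neq_implies_less)

lemma oplus_char:
  assumes "n \<ge> 1"
  shows "oplus n k l = (if (k + l) mod n = 0 then n else (k + l) mod n)"
  unfolding oplus_def
proof (rule the_equality)
  show "(if (k + l) mod n = 0 then n else (k + l) mod n) \<in> G n \<and>
    (if (k + l) mod n = 0 then n else (k + l) mod n) mod n = (k + l) mod n"
    using assms by (auto simp: G_def dest: le_neq_implies_less)
next
  fix m assume "m \<in> G n \<and> m mod n = (k + l) mod n"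
  thus "m = (if (k + l) mod n = 0 then n else (k + l) mod n)" using Gmod_eq by metis
qed

lemma oplus_in: "n \<ge> 1 \<Longrightarrow> oplus n k l \<in> G n"
  by (auto simp: oplus_char G_def)

lemma oplus_comm: "n \<ge> 1 \<Longrightarrow> oplus n k l = oplus n l k"
  by (simp add: oplus_char add.commute)

lemma modcancel: "(r + j) mod n = (r' + j) mod (n::nat) \<Longrightarrow> r mod n = r' mod n"
proof -
  assume h: "(r + j) mod n = (r' + j) mod n"
  have "(int r + int j) mod int n = (int r' + int j) mod int n"
    using h by (metis of_nat_add zmod_int)
  hence "int n dvd (int r + int j) - (int r' + int j)" by (simp only: mod_eq_dvd_iff)
  hence "int n dvd int r - int r'" by simp
  hence "int r mod int n = int r' mod int n" by (simp only: mod_eq_dvd_iff[symmetric])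
  thus ?thesis by (metis of_nat_eq_iff zmod_int)
qed

lemma oplus_inj:
  assumes "n \<ge> 1" "r \<in> G n" "r' \<in> G n" "oplus n r j = oplus n r' j"
  shows "r = r'"
proof -
  have "(r + j) mod n = (r' + j) mod n"
  proof -
    have "(r + j) mod n < n" "(r' + j) mod n < n" using assms(1) by auto
    moreover have "(if a = 0 then n else a) = (if a' = 0 then n else a') \<Longrightarrow> a < n \<Longrightarrow> a' < n \<Longrightarrow> a = a'"
      for a a' :: nat by (auto split: if_splits)
    ultimately show ?thesis using assms(4) unfolding oplus_char[OF assms(1)] by blast
  qed
  hence "r mod n = r' mod n" by (rule modcancel)
  thus ?thesis using Gmod_eq[OF assms(2)] Gmod_eq[OF assms(3)] by metis
qed

lemma oplus_bij: "n \<ge> 1 \<Longrightarrow> bij_betw (\<lambda>r. oplus n r j) (G n) (G n)"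
proof -
  assume n: "n \<ge> 1"
  have inj: "inj_on (\<lambda>r. oplus n r j) (G n)" using oplus_inj[OF n] by (auto simp: inj_on_def)
  have "(\<lambda>r. oplus n r j) ` G n = G n"
    by (rule endo_inj_surj[OF finG _ inj]) (use oplus_in[OF n] in auto)
  thus ?thesis using inj by (simp add: bij_betw_def)
qed

lemma sum_triple:
  "(\<Sum>R\<in>(A \<times> B) \<times> C. f R) = (\<Sum>a\<in>A. \<Sum>b\<in>B. \<Sum>c\<in>C. f ((a, b), c))"
  by (simp add: sum.cartesian_product')

lemma mmul_Jop: "mmul (G n) Jop \<gamma> (b, c) z = (if b = c \<and> b \<in> G n then \<gamma> b z else 0)"
  by (cases "b = c") (simp_all add: mmul_def Jop_def)

lemma eop_eq: "eop n \<gamma> (b, c) (b', c') = (if b = c \<and> b' = c' \<and> b \<in> G n \<and> b' \<in> G n then \<gamma> b b' else 0)"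
  unfolding eop_def mmul_def[of _ "mmul (G n) Jop \<gamma>"] mmul_Jop
  by (cases "b' = c'") (auto simp: adj_def Jop_def ifz_simps)

lemma inner_step:
  fixes n b i j \<rho> \<gamma>
  defines "T \<equiv> (G n \<times> G n) \<times> G n"
  defines "\<xi> \<equiv> xi n b i j"
  shows "mmul T (tensor (Fop n b i j) idop) (assoc_op (tensor \<rho> (eop n \<gamma>))) ((m, r), s) ((a2, b2), c2) =
    (if s \<in> G n \<and> b2 = c2 \<and> b2 \<in> G n then \<xi> (m, r) * \<gamma> s b2 * (\<Sum>a\<in>G n. cnj (\<xi> (a, s)) * \<rho> a a2) else 0)"
proof -
  define g where "g a b' c = \<xi> (m, r) * cnj (\<xi> (a, b')) * idop s c * (\<rho> a a2 * eop n \<gamma> (b', c) (b2, c2))" for a b' c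
  have "mmul T (tensor (Fop n b i j) idop) (assoc_op (tensor \<rho> (eop n \<gamma>))) ((m, r), s) ((a2, b2), c2)
     = (\<Sum>a\<in>G n. \<Sum>b'\<in>G n. \<Sum>c\<in>G n. g a b' c)"
    unfolding mmul_def T_def sum_triple
    by (simp add: tensor_def assoc_op_def Fop_def ketbra_def g_def \<xi>_def)
  also have "\<dots> = (\<Sum>a\<in>G n. \<Sum>b'\<in>G n. if s \<in> G n then \<xi> (m, r) * cnj (\<xi> (a, b')) * (\<rho> a a2 * eop n \<gamma> (b', s) (b2, c2)) else 0)"
    by (simp add: g_def idop_def ifz_simps cong: if_cong)
  also have "\<dots> = (if s \<in> G n \<and> b2 = c2 \<and> b2 \<in> G n then \<xi> (m, r) * \<gamma> s b2 * (\<Sum>a\<in>G n. cnj (\<xi> (a, s)) * \<rho> a a2) else 0)"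
  proof (cases "s \<in> G n \<and> b2 = c2 \<and> b2 \<in> G n")
    case True
    hence s: "s \<in> G n" and bc: "b2 = c2" and c2: "c2 \<in> G n" by auto
    show ?thesis unfolding if_P[OF True] using s c2 unfolding bc
      by (simp add: eop_eq ifz_simps sum_distrib_left mult_ac)
  next
    case False
    have ez: "eop n \<gamma> (b', s) (b2, c2) = 0" for b'
      using False unfolding eop_eq by auto
    show ?thesis unfolding if_not_P[OF False] 
      by (intro sum.neutral ballI) (simp add: ez)
  qed
  finally show ?thesis .
qed

lemma sandwich_eq:
  assumes n: "n \<ge> 1" and s: "s \<in> G n" and s': "s' \<in> G n"
  shows "sandwich n b i j \<rho> \<gamma> ((m, r), s) ((m', r'), s') =
    xi n b i j (m, r) * cnj (xi n b i j (m', r')) * \<gamma> s s' *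
    (cnj (b i (oplus n s j)) * \<rho> (oplus n s j) (oplus n s' j) * b i (oplus n s' j))"
proof -
  define \<xi> where "\<xi> = xi n b i j"
  define T where "T = (G n \<times> G n) \<times> G n"
  define C where "C a2 = (\<Sum>a\<in>G n. cnj (\<xi> (a, s)) * \<rho> a a2)" for a2
  have "sandwich n b i j \<rho> \<gamma> ((m, r), s) ((m', r'), s') =
     (\<Sum>a2\<in>G n. \<Sum>b2\<in>G n. \<Sum>c2\<in>G n.
        (if b2 = c2 \<and> b2 \<in> G n then \<xi> (m, r) * \<gamma> s b2 * C a2 else 0) *
        (\<xi> (a2, b2) * cnj (\<xi> (m', r')) * idop c2 s'))"
    unfolding sandwich_def mmul_def[of "(G n \<times> G n) \<times> G n" "mmul _ _ _"] sum_triple inner_step \<xi>_def C_def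
    using s by (simp add: tensor_def Fop_def ketbra_def)
  also have "\<dots> = (\<Sum>a2\<in>G n. \<xi> (m, r) * \<gamma> s s' * C a2 * (\<xi> (a2, s') * cnj (\<xi> (m', r'))))"
    using s' by (simp add: idop_def ifz_simps)
  also have "\<dots> = \<xi> (m, r) * cnj (\<xi> (m', r')) * \<gamma> s s' * (\<Sum>a2\<in>G n. C a2 * \<xi> (a2, s'))"
    by (simp add: sum_distrib_left mult_ac)
  also have "(\<Sum>a2\<in>G n. C a2 * \<xi> (a2, s')) =
     cnj (b i (oplus n s j)) * \<rho> (oplus n s j) (oplus n s' j) * b i (oplus n s' j)"
    using oplus_in[OF n] unfolding C_def \<xi>_def xi_def
    by (simp add: ifz_simps)
  finally show ?thesis unfolding \<xi>_def .
qed

lemma Kconj_eq: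
  assumes n: "n \<ge> 1"
  shows "Kconj n j M x y = M (oplus n j x) (oplus n j y)"
  using oplus_in[OF n] by (simp add: Kconj_def mmul_def Uop_def adj_def ifz_simps)

theorem proposition3:
  fixes n :: nat and b :: "nat \<Rightarrow> nat \<Rightarrow> complex" and i j :: nat
    and \<rho> \<gamma> :: "(nat, nat) kernel"
  assumes "n \<ge> 1"
    and "orthonormal_basis n b"
    and "i \<in> G n" and "j \<in> G n"
    and "is_state (G n) \<rho>"
    and "trace (G n) (Kmap n (ketbra (\<lambda>m. cnj (b i m))) \<rho>) > 0"
    and "is_state (G n) \<gamma>"
    and "trace (G n) (Kmap n \<gamma> (Kconj n j (Kmap n (ketbra (\<lambda>m. cnj (b i m))) \<rho>))) > 0"
  shows "trace ((G n \<times> G n) \<times> G n) (sandwich n b i j \<rho> \<gamma>) > 0 \<and>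
    (\<forall>x\<in>G n. \<forall>y\<in>G n.
       Lambda n b i j \<rho> \<gamma> x y = Khat n \<gamma> (Kconj n j (Khat n (ketbra (\<lambda>m. cnj (b i m))) \<rho>)) x y)"
proof -
  note n = assms(1) and ob = assms(2) and i = assms(3)
  define \<xi> where "\<xi> = xi n b i j"
  define S where "S = sandwich n b i j \<rho> \<gamma>"
  define tt where "tt x y = cnj (b i (oplus n x j)) * \<rho> (oplus n x j) (oplus n y j) * b i (oplus n y j)" for x y
  define N where "N = (\<Sum>p\<in>G n \<times> G n. \<xi> p * cnj (\<xi> p))"
  define TT where "TT = (\<Sum>s\<in>G n. \<gamma> s s * tt s s)"
  have Sp: "S (p, s) (p, s') = \<xi> p * cnj (\<xi> p) * \<gamma> s s' * tt s s'" if "s \<in> G n" "s' \<in> G n" for p s s'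
    using sandwich_eq[OF n that] unfolding S_def \<xi>_def tt_def by (cases p) simp
  have ptr: "ptrace1 (G n \<times> G n) S x y = N * \<gamma> x y * tt x y" if "x \<in> G n" "y \<in> G n" for x y
    unfolding ptrace1_def N_def using Sp[OF that] by (simp add: sum_distrib_left sum_distrib_right mult_ac)
  have tr: "trace ((G n \<times> G n) \<times> G n) S = N * TT"
    unfolding trace_def TT_def N_def sum.cartesian_product'
    by (simp add: Sp sum_distrib_right sum_distrib_left mult_ac)
  have N1: "N = 1"
  proof -
    define f where "f m = b i m * cnj (b i m)" for m
    have "N = (\<Sum>m\<in>G n. \<Sum>r\<in>G n. if m = oplus n r j then f m else 0)"
      unfolding N_def sum.cartesian_product' \<xi>_def xi_def f_def by (intro sum.cong refl) auto
    also have "\<dots> = (\<Sum>r\<in>G n. \<Sum>m\<in>G n. if m = oplus n r j then f m else 0)"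
      by (rule sum.swap)
    also have "\<dots> = (\<Sum>r\<in>G n. f (oplus n r j))"
      using oplus_in[OF n] by simp
    also have "\<dots> = (\<Sum>m\<in>G n. f m)"
      using sum.reindex_bij_betw[OF oplus_bij[OF n, of j], of f] by simp
    also have "\<dots> = inner (G n) (b i) (b i)"
      unfolding inner_def f_def by (simp add: mult.commute)
    also have "\<dots> = 1" using ob i unfolding orthonormal_basis_def by simp
    finally show ?thesis .
  qed
  define K1 where "K1 = Kmap n (ketbra (\<lambda>m. cnj (b i m))) \<rho>"
  have K1: "K1 x y = (if x \<in> G n \<and> y \<in> G n then cnj (b i x) * b i y * \<rho> x y else 0)" for x y
    unfolding K1_def Kmap_eq[OF ketbra_rep[OF ob i]] by (simp add: ketbra_def)
  have Kg: "Kmap n \<gamma> M x y = (if x \<in> G n \<and> y \<in> G n then \<gamma> x y * M x y else 0)" for M x y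
    using Kmap_eq[OF state_rep] assms(7) unfolding is_state_def by blast
  have KcK1: "Kconj n j K1 x y = tt x y" for x y
    unfolding Kconj_eq[OF n] K1 tt_def using oplus_in[OF n] oplus_comm[OF n] by simp
  define c1 where "c1 = trace (G n) K1"
  have c1: "c1 \<noteq> 0" using assms(6) unfolding c1_def K1_def by auto
  have TTeq: "trace (G n) (Kmap n \<gamma> (Kconj n j K1)) = TT"
    unfolding trace_def TT_def Kg KcK1 by simp
  have TT: "TT > 0" using assms(8) unfolding TTeq[unfolded K1_def] .
  hence TT0: "TT \<noteq> 0" by auto
  have Kh1: "Khat n (ketbra (\<lambda>m. cnj (b i m))) \<rho> = (\<lambda>x y. K1 x y / c1)"
    unfolding Khat_def K1_def c1_def ..
  have Kc2: "Kconj n j (\<lambda>x y. K1 x y / c1) x y = tt x y / c1" for x y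
    using KcK1[of x y] unfolding Kconj_eq[OF n] by simp
  have tr2: "trace (G n) (Kmap n \<gamma> (Kconj n j (\<lambda>x y. K1 x y / c1))) = TT / c1"
    unfolding trace_def TT_def Kg Kc2 by (simp add: sum_divide_distrib)
  show ?thesis
  proof
    show "trace ((G n \<times> G n) \<times> G n) (sandwich n b i j \<rho> \<gamma>) > 0"
      using tr TT N1 unfolding S_def by simp
    show "\<forall>x\<in>G n. \<forall>y\<in>G n. Lambda n b i j \<rho> \<gamma> x y =
       Khat n \<gamma> (Kconj n j (Khat n (ketbra (\<lambda>m. cnj (b i m))) \<rho>)) x y"
    proof (intro ballI)
      fix x y assume x: "x \<in> G n" and y: "y \<in> G n"
      have "Lambda n b i j \<rho> \<gamma> x y = \<gamma> x y * tt x y / TT"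
        unfolding Lambda_def S_def[symmetric] ptr[OF x y] tr N1 by simp
      moreover have "Khat n \<gamma> (Kconj n j (Khat n (ketbra (\<lambda>m. cnj (b i m))) \<rho>)) x y = \<gamma> x y * tt x y / TT"
        unfolding Kh1 Khat_def[of n \<gamma>] tr2 unfolding Kg Kc2 using x y c1 TT0 by (simp add: field_simps)
      ultimately show "Lambda n b i j \<rho> \<gamma> x y =
       Khat n \<gamma> (Kconj n j (Khat n (ketbra (\<lambda>m. cnj (b i m))) \<rho>)) x y" by simp
    qed
  qed
qed

end
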